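(* Consider equation (E) and assume each $\tau_i$ is non-decreasing. Let $p>0$ be a constant with $p_i(t)\ge p$ for all $t\ge t_0$ and $i=1,\dots,m$. If $$p^{m}\limsup_{t\to+\infty}\prod_{i=1}^{m}\big(t-\tau_i(t)\big)>\frac{1}{m^{m}},$$ then all solutions of (E) oscillate.
   Context: Equation (E) is $x'(t)+\sum_{i=1}^{m}p_i(t)\,x(\tau_i(t))=0$, $t\ge t_0$, where $m\ge1$ is an integer and, for each $i$, $p_i,\tau_i:[t_0,\infty)\to[0,\infty)$ are continuous, $\tau_i(t)\le t$ for $t\ge t_0$, and $\lim_{t\to\infty}\tau_i(t)=\infty$. Let $\tau(t)=\min_i\tau_i(t)$ and $\tau_{(-1)}(t)=\sup\{s:\tau(s)\le t\}$. A solution of (E) is a function $x\in C([T_0,\infty);\mathbb{R})$ for some $T_0\ge t_0$ which is continuously differentiable on $[\tau_{(-1)}(T_0),\infty)$ and satisfies (E) for $t\ge\tau_{(-1)}(T_0)$. A solution is oscillatory if it has arbitrarily large zeros; "all solutions oscillate" means every solution is oscillatory. *)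

theory Defs
  imports "HOL-Analysis.Analysis"
begin

text \<open>Equation (E): x'(t) + sum_{i=1}^m p_i(t) x(tau_i(t)) = 0, t >= t0.
  Indices i range over {1..m}.\<close>

definition tau_min :: "nat \<Rightarrow> (nat \<Rightarrow> real \<Rightarrow> real) \<Rightarrow> real \<Rightarrow> real" where
  "tau_min m \<tau> t = Min ((\<lambda>i. \<tau> i t) ` {1..m})"

definition tau_inv :: "real \<Rightarrow> nat \<Rightarrow> (nat \<Rightarrow> real \<Rightarrow> real) \<Rightarrow> real \<Rightarrow> real" where
  "tau_inv t0 m \<tau> t = Sup {s. t0 \<le> s \<and> tau_min m \<tau> s \<le> t}"

definition is_solution ::
  "real \<Rightarrow> nat \<Rightarrow> (nat \<Rightarrow> real \<Rightarrow> real) \<Rightarrow> (nat \<Rightarrow> real \<Rightarrow> real) \<Rightarrow> (real \<Rightarrow> real) \<Rightarrow> real \<Rightarrow> bool" where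
  "is_solution t0 m p \<tau> x T0 \<longleftrightarrow>
     t0 \<le> T0 \<and> continuous_on {T0..} x \<and>
     (\<exists>x'. continuous_on {tau_inv t0 m \<tau> T0..} x' \<and>
        (\<forall>t\<ge>tau_inv t0 m \<tau> T0. (x has_real_derivative x' t) (at t within {tau_inv t0 m \<tau> T0..})) \<and>
        (\<forall>t\<ge>tau_inv t0 m \<tau> T0. x' t + (\<Sum>i=1..m. p i t * x (\<tau> i t)) = 0))"

definition oscillatory :: "(real \<Rightarrow> real) \<Rightarrow> bool" where
  "oscillatory x \<longleftrightarrow> (\<forall>T. \<exists>t\<ge>T. x t = 0)"

end

theory Submission
  imports Defs
begin

lemma amgm:
  fixes a :: "nat \<Rightarrow> real"
  assumes fin: "finite S" and ne: "S \<noteq> {}" and nn: "\<And>i. i\<in>S \<Longrightarrow> 0 \<le> a i"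
  shows "(\<Prod>i\<in>S. a i) \<le> ((\<Sum>i\<in>S. a i) / card S) ^ card S"
proof -
  let ?n = "card S"
  have n: "?n > 0" using fin ne by (simp add: card_gt_0_iff)
  have P: "0 \<le> (\<Prod>i\<in>S. a i)" using nn by (simp add: prod_nonneg)
  have "(\<Prod>i\<in>S. a i) powr (1 / ?n) \<le> (\<Sum>i\<in>S. a i / ?n)"
    using arith_geom_mean[OF fin ne, of a] nn by blast
  also have "\<dots> = (\<Sum>i\<in>S. a i) / ?n" by (simp add: sum_divide_distrib)
  finally have le: "(\<Prod>i\<in>S. a i) powr (1 / ?n) \<le> (\<Sum>i\<in>S. a i) / ?n" .
  have eq: "(\<Prod>i\<in>S. a i) = ((\<Prod>i\<in>S. a i) powr (1 / ?n)) ^ ?n"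
  proof (cases "(\<Prod>i\<in>S. a i) = 0")
    case True then show ?thesis using n by simp
  next
    case False
    then have pp: "0 < (\<Prod>i\<in>S. a i)" using P by simp
    have "((\<Prod>i\<in>S. a i) powr (1 / ?n)) ^ ?n = ((\<Prod>i\<in>S. a i) powr (1 / ?n)) powr ?n"
      using pp by (simp add: powr_realpow)
    also have "\<dots> = (\<Prod>i\<in>S. a i)" using n P by (simp add: powr_powr)
    finally show ?thesis by simp
  qed
  have "(\<Prod>i\<in>S. a i) \<le> ((\<Sum>i\<in>S. a i) / ?n) ^ ?n"
    by (subst eq, rule power_mono[OF le]) simp
  then show ?thesis .
qed

lemma pos_case:
  fixes m :: nat and p \<tau> :: "nat \<Rightarrow> real \<Rightarrow> real" and x x' :: "real \<Rightarrow> real"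
  assumes m_pos: "1 \<le> m"
    and tau_le: "\<And>i t. i \<in> {1..m} \<Longrightarrow> t0 \<le> t \<Longrightarrow> \<tau> i t \<le> t"
    and tau_lim: "\<And>i. i \<in> {1..m} \<Longrightarrow> filterlim (\<tau> i) at_top at_top"
    and tau_mono: "\<And>i. i \<in> {1..m} \<Longrightarrow> mono_on {t0..} (\<tau> i)"
    and pc_pos: "0 < pc"
    and p_ge: "\<And>i t. i \<in> {1..m} \<Longrightarrow> t0 \<le> t \<Longrightarrow> pc \<le> p i t"
    and freq: "\<And>T. \<exists>t\<ge>T. 1 \<le> pc * (\<Sum>i=1..m. t - \<tau> i t)"
    and der: "\<And>t. t \<ge> A \<Longrightarrow> (x has_real_derivative x' t) (at t within {A..})"
    and eq: "\<And>t. t \<ge> A \<Longrightarrow> x' t + (\<Sum>i=1..m. p i t * x (\<tau> i t)) = 0"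
    and pos: "\<And>t. t \<ge> B \<Longrightarrow> x t > 0"
  shows False
proof -
  have ev: "\<exists>T. \<forall>s\<ge>T. \<forall>i\<in>{1..m}. \<tau> i s \<ge> L" for L
  proof -
    have "eventually (\<lambda>s. \<forall>i\<in>{1..m}. L \<le> \<tau> i s) at_top"
      by (rule eventually_ball_finite) (use tau_lim in \<open>auto simp: filterlim_at_top\<close>)
    then show ?thesis by (auto simp: eventually_at_top_linorder)
  qed
  define B' where "B' = max B (max A t0) + 1"
  obtain C0 where C0: "\<And>s i. s \<ge> C0 \<Longrightarrow> i\<in>{1..m} \<Longrightarrow> \<tau> i s \<ge> B'" using ev by blast
  define C where "C = max C0 B'"
  obtain E0 where E0: "\<And>s i. s \<ge> E0 \<Longrightarrow> i\<in>{1..m} \<Longrightarrow> \<tau> i s \<ge> C" using ev by blast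
  define E where "E = max E0 C"
  obtain D0 where D0: "\<And>s i. s \<ge> D0 \<Longrightarrow> i\<in>{1..m} \<Longrightarrow> \<tau> i s \<ge> E" using ev by blast
  define D where "D = max D0 E"
  have CB': "C \<ge> B'" "B' > A" "B' > B" "B' > t0" "E \<ge> C" "D \<ge> E"
    unfolding C_def B'_def E_def D_def by auto
  have derat: "(x has_real_derivative x' s) (at s)" if "s \<ge> C" for s
  proof -
    have "s > A" using that CB' by linarith
    then have "at s within {A..} = at s"
      by (intro at_within_interior) (simp add: interior_Ici[of "A - 1"])
    with der[of s] \<open>s > A\<close> show ?thesis by simp
  qed
  have xpos: "x (\<tau> i s) > 0" if "s \<ge> C" "i \<in> {1..m}" for s i
    using C0[of s i] that CB' pos[of "\<tau> i s"] unfolding C_def by auto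
  have dneg: "x' s \<le> 0" if "s \<ge> C" for s
  proof -
    have "0 \<le> (\<Sum>i=1..m. p i s * x (\<tau> i s))"
    proof (rule sum_nonneg)
      fix i assume i: "i \<in> {1..m}"
      have "pc \<le> p i s" using p_ge[OF i] that CB' by simp
      then show "0 \<le> p i s * x (\<tau> i s)" using xpos[OF that i] pc_pos by simp
    qed
    then show ?thesis using eq[of s] that CB' by simp
  qed
  have xmono: "x v \<le> x u" if "C \<le> u" "u \<le> v" for u v
    by (rule DERIV_nonpos_imp_nonincreasing[OF \<open>u \<le> v\<close>])
       (use that derat dneg in \<open>meson order_trans\<close>)
  obtain t where t: "t \<ge> D" and big: "1 \<le> pc * (\<Sum>i=1..m. t - \<tau> i t)" using freq by blast
  define S where "S = (\<Sum>j=1..m. x (\<tau> j t))"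
  have tC: "t \<ge> C" using t CB' by simp
  have Spos: "S > 0" unfolding S_def
    by (rule sum_pos) (use m_pos xpos[OF tC] in auto)
  have key: "pc * S * (t - \<tau> i t) \<le> x (\<tau> i t) - x t" if i: "i \<in> {1..m}" for i
  proof -
    define u where "u = \<tau> i t"
    have uE: "u \<ge> E" using D0[of t i] t i unfolding u_def D_def by simp
    have ut: "u \<le> t" using tau_le[OF i, of t] t CB' unfolding u_def by simp
    define g where "g s = x s + pc * S * s" for s
    have "g t \<le> g u"
    proof (rule DERIV_nonpos_imp_nonincreasing[OF ut])
      fix s assume s: "u \<le> s" "s \<le> t"
      have sC: "s \<ge> C" "s \<ge> E" "s \<ge> t0" using s uE CB' by auto
      have dg: "(g has_real_derivative x' s + pc * S) (at s)"
        unfolding g_def using derat[OF sC(1)]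
        by (auto intro!: derivative_eq_intros)
      have "pc * S = (\<Sum>j=1..m. pc * x (\<tau> j t))" unfolding S_def by (simp add: sum_distrib_left)
      also have "\<dots> \<le> (\<Sum>j=1..m. p j s * x (\<tau> j s))"
      proof (rule sum_mono)
        fix j assume j: "j \<in> {1..m}"
        have tsj: "\<tau> j s \<ge> C" using E0[of s j] sC j unfolding E_def by simp
        have "\<tau> j s \<le> \<tau> j t"
          by (rule mono_onD[OF tau_mono[OF j]]) (use sC s in auto)
        then have xx: "x (\<tau> j t) \<le> x (\<tau> j s)" using xmono tsj by blast
        have "pc \<le> p j s" using p_ge[OF j sC(3)] .
        then show "pc * x (\<tau> j t) \<le> p j s * x (\<tau> j s)"
          using xx xpos[OF tC j] pc_pos by (intro mult_mono) auto
      qed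
      finally have "x' s + pc * S \<le> 0" using eq[of s] sC CB' by simp
      with dg show "\<exists>y. (g has_real_derivative y) (at s) \<and> y \<le> 0" by blast
    qed
    then show ?thesis unfolding g_def u_def by (simp add: algebra_simps)
  qed
  have "pc * S * (\<Sum>i=1..m. t - \<tau> i t) = (\<Sum>i=1..m. pc * S * (t - \<tau> i t))"
    by (simp add: sum_distrib_left)
  also have "\<dots> \<le> (\<Sum>i=1..m. x (\<tau> i t) - x t)" by (rule sum_mono) (rule key)
  also have "\<dots> = S - real m * x t" unfolding S_def by (simp add: sum_subtractf)
  also have "\<dots> < S" using pos[of t] t CB' m_pos by simp
  finally have lt: "pc * S * (\<Sum>i=1..m. t - \<tau> i t) < S" .
  have "S \<le> S * (pc * (\<Sum>i=1..m. t - \<tau> i t))" using big Spos by simp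
  with lt show False by (simp add: algebra_simps)
qed

theorem corollary3p5:
  fixes t0 :: real and m :: nat and p :: "nat \<Rightarrow> real \<Rightarrow> real"
    and \<tau> :: "nat \<Rightarrow> real \<Rightarrow> real" and pc :: real
  assumes m_pos: "1 \<le> m"
    and p_cont: "\<And>i. i \<in> {1..m} \<Longrightarrow> continuous_on {t0..} (p i)"
    and tau_cont: "\<And>i. i \<in> {1..m} \<Longrightarrow> continuous_on {t0..} (\<tau> i)"
    and p_nonneg: "\<And>i t. i \<in> {1..m} \<Longrightarrow> t0 \<le> t \<Longrightarrow> 0 \<le> p i t"
    and tau_nonneg: "\<And>i t. i \<in> {1..m} \<Longrightarrow> t0 \<le> t \<Longrightarrow> 0 \<le> \<tau> i t"
    and tau_le: "\<And>i t. i \<in> {1..m} \<Longrightarrow> t0 \<le> t \<Longrightarrow> \<tau> i t \<le> t"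
    and tau_lim: "\<And>i. i \<in> {1..m} \<Longrightarrow> filterlim (\<tau> i) at_top at_top"
    and tau_mono: "\<And>i. i \<in> {1..m} \<Longrightarrow> mono_on {t0..} (\<tau> i)"
    and pc_pos: "0 < pc"
    and p_ge: "\<And>i t. i \<in> {1..m} \<Longrightarrow> t0 \<le> t \<Longrightarrow> pc \<le> p i t"
    and cond: "ereal (pc ^ m) * Limsup at_top (\<lambda>t. ereal (\<Prod>i=1..m. t - \<tau> i t))
                 > ereal (1 / real m ^ m)"
  shows "\<forall>x T0. is_solution t0 m p \<tau> x T0 \<longrightarrow> oscillatory x"
proof (intro allI impI)
  have freq: "\<exists>t\<ge>T. 1 \<le> pc * (\<Sum>i=1..m. t - \<tau> i t)" for T
  proof (rule ccontr)
    assume "\<not> ?thesis"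
    then have lt: "\<And>t. t \<ge> T \<Longrightarrow> pc * (\<Sum>i=1..m. t - \<tau> i t) < 1" by force
    define c where "c = (1 / (pc * m)) ^ m"
    have mpos: "real m > 0" using m_pos by simp
    have "eventually (\<lambda>t. ereal (\<Prod>i=1..m. t - \<tau> i t) \<le> ereal c) at_top"
      unfolding eventually_at_top_linorder
    proof (intro exI allI impI)
      fix t assume t: "max T t0 \<le> t"
      have nn: "\<And>i. i \<in> {1..m} \<Longrightarrow> 0 \<le> t - \<tau> i t" using tau_le t by force
      have "(\<Prod>i=1..m. t - \<tau> i t) \<le> ((\<Sum>i=1..m. t - \<tau> i t) / m) ^ m"
        using amgm[of "{1..m}" "\<lambda>i. t - \<tau> i t"] nn m_pos by simp
      also have "\<dots> \<le> c" unfolding c_def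
      proof (rule power_mono)
        have "(\<Sum>i=1..m. t - \<tau> i t) \<le> 1 / pc" using lt[of t] t pc_pos
          by (simp add: field_simps)
        then show "(\<Sum>i=1..m. t - \<tau> i t) / real m \<le> 1 / (pc * real m)"
          using mpos pc_pos by (simp add: field_simps)
        have "0 \<le> (\<Sum>i=1..m. t - \<tau> i t)" using nn by (intro sum_nonneg) auto
        then show "0 \<le> (\<Sum>i=1..m. t - \<tau> i t) / real m" by simp
      qed
      finally show "ereal (\<Prod>i=1..m. t - \<tau> i t) \<le> ereal c" by simp
    qed
    then have "Limsup at_top (\<lambda>t. ereal (\<Prod>i=1..m. t - \<tau> i t)) \<le> ereal c"
      by (rule Limsup_bounded)
    then have "ereal (pc ^ m) * Limsup at_top (\<lambda>t. ereal (\<Prod>i=1..m. t - \<tau> i t)) \<le> ereal (pc ^ m) * ereal c"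
      by (rule ereal_mult_left_mono) (use pc_pos in simp)
    also have "\<dots> = ereal (1 / real m ^ m)" unfolding c_def using pc_pos mpos
      by (simp add: power_divide power_mult_distrib)
    finally show False using cond by simp
  qed
  fix x T0 assume sol: "is_solution t0 m p \<tau> x T0"
  show "oscillatory x"
  proof (rule ccontr)
    assume "\<not> oscillatory x"
    then obtain T where T: "\<And>t. t \<ge> T \<Longrightarrow> x t \<noteq> 0" unfolding oscillatory_def by force
    define A where "A = tau_inv t0 m \<tau> T0"
    from sol obtain x' where T0: "t0 \<le> T0" and xc: "continuous_on {T0..} x"
      and der: "\<And>t. t \<ge> A \<Longrightarrow> (x has_real_derivative x' t) (at t within {A..})"
      and eq: "\<And>t. t \<ge> A \<Longrightarrow> x' t + (\<Sum>i=1..m. p i t * x (\<tau> i t)) = 0"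
      unfolding is_solution_def A_def by blast
    define B where "B = max T (max T0 A)"
    have cB: "continuous_on {B..t} x" for t
      by (rule continuous_on_subset[OF xc]) (auto simp: B_def)
    have sign: "(\<forall>t\<ge>B. x t > 0) \<or> (\<forall>t\<ge>B. x t < 0)"
    proof (cases "x B > 0")
      case True
      have "x t > 0" if "t \<ge> B" for t
      proof (rule ccontr)
        assume "\<not> x t > 0"
        then have "x t \<le> 0" by simp
        then obtain z where "B \<le> z" "z \<le> t" "x z = 0"
          using IVT2'[of x t 0 B] \<open>t \<ge> B\<close> cB[of t] True \<open>x t \<le> 0\<close> by force
        then show False using T[of z] by (simp add: B_def)
      qed
      then show ?thesis by blast
    next
      case False
      then have xB: "x B < 0" using T[of B] by (force simp: B_def)
      have "x t < 0" if "t \<ge> B" for t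
      proof (rule ccontr)
        assume "\<not> x t < 0"
        then have "x t \<ge> 0" by simp
        then obtain z where "B \<le> z" "z \<le> t" "x z = 0"
          using IVT'[of x B 0 t] \<open>t \<ge> B\<close> cB[of t] xB \<open>x t \<ge> 0\<close> by force
        then show False using T[of z] by (simp add: B_def)
      qed
      then show ?thesis by blast
    qed
    then show False
    proof
      assume "\<forall>t\<ge>B. x t > 0"
      then show False
        using pos_case[OF m_pos tau_le tau_lim tau_mono pc_pos p_ge freq der eq, of B] by blast
    next
      assume neg: "\<forall>t\<ge>B. x t < 0"
      have der': "((\<lambda>s. - x s) has_real_derivative - x' t) (at t within {A..})" if "t \<ge> A" for t
        using der[OF that] by (rule DERIV_minus)
      have eq': "- x' t + (\<Sum>i=1..m. p i t * - x (\<tau> i t)) = 0" if "t \<ge> A" for t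
        using eq[OF that] by (simp add: sum_negf)
      show False
        using pos_case[OF m_pos tau_le tau_lim tau_mono pc_pos p_ge freq der' eq', of B] neg by force
    qed
  qed
qed

end
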